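(* Let $a$ be a strongly regular scale factor (extended evenly to negative arguments) such that either (i) $\dot a(0^+)=0$ and there is $\epsilon>0$ with $\ddot a(t)\ge0$ on $(0,\epsilon)$, or (ii) $\infty>\dot a(0^+)>0$, and such that $\left|\frac{\dddot a(t)a^2(t)}{\dot a^3(t)}\right|\le C$ for all $t>0$ and some constant $C>0$. Consider the two-dimensional extended spacetime with coordinates $(\tau,\rho)$, $\tau>0$, $|\rho|<\rho_{\max}(\tau)$, and metric $ds^2=g_{\tau\tau}(\tau,\rho)\,d\tau^2+d\rho^2$. Then the cosmological-time-zero set $\mathcal M^0=\{(\tau,\pm\rho_{\mathcal M_\tau}):\tau>0\}$ is lightlike: for every $\tau>0$ the tangent vector $u=(1,\pm\frac{d\rho_{\mathcal M_\tau}}{d\tau})$ to $\mathcal M^0$ at $(\tau,\pm\rho_{\mathcal M_\tau})$ satisfies $g(u,u)=g_{\tau\tau}(\tau,\rho_{\mathcal M_\tau})+\left(\frac{d\rho_{\mathcal M_\tau}}{d\tau}\right)^2=0$.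
   Context: A function $a:[0,\infty)\to[0,\infty)$ is a regular scale factor if: (a) $a(0)=0$; (b) $a$ is increasing and continuous on $[0,\infty)$, twice continuously differentiable on $(0,\infty)$, with an inverse function on $[0,\infty)$; (c) $\frac{a(t)\ddot a(t)}{\dot a(t)^2}\le1$ for all $t>0$ (presupposing $\dot a(t)\ne0$). It is strongly regular if also $\frac{a\ddot a}{\dot a^2}\ge-K$ on $(0,\infty)$ for a constant $K\ge1$. $\dot a(0^+)=\lim_{t\to0^+}\dot a(t)$. Extend $a$ by $a(-t)=a(t)$. The original spacetime is the two-dimensional Robertson–Walker spacetime $ds^2=-dt^2+a^2(t)d\chi^2$, $t>0$; $(\tau,\rho)$ are Fermi coordinates of the comoving observer at $\chi=0$ ($\tau$ proper time, $\rho$ proper distance along orthogonal spacelike geodesics). For $\tau>0$, $\rho_{\mathcal M_\tau}=\int_0^\tau\frac{a(t)}{\sqrt{a^2(\tau)-a^2(t)}}dt$. For $\tau>0$ and $|\rho|<2\rho_{\mathcal M_\tau}$, $t_0(\tau,\rho)$ is the unique $t_0\in(-\tau,\tau)$ with $|\rho|=\int_{t_0}^\tau\frac{a(t)}{\sqrt{a^2(\tau)-a^2(t)}}dt$ (the cosmological time of the point; $t_0=0$ iff $|\rho|=\rho_{\mathcal M_\tau}$). For $0\le t_0<\tau$, $f(\tau,t_0)=\int_{t_0}^{\tau}\frac{\ddot a(t)}{\dot a(t)^2}\left(\frac{\sqrt{a^2(\tau)-a^2(t_0)}}{\sqrt{a^2(\tau)-a^2(t)}}-1\right)dt$; for $-\tau<t_0<0$,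 $f(\tau,t_0)=2f(\tau,0)-f(\tau,-t_0)$. Then $g_{\tau\tau}(\tau,\rho)=-[1-\dot a(\tau)f(\tau,t_0(\tau,\rho))]^2$. Finally $\rho_{\max}(\tau)=\inf\{\rho:0<\rho<2\rho_{\mathcal M_\tau},\ g_{\tau\tau}(\tau,\rho)=0\}$ if this set is nonempty, and $\rho_{\max}(\tau)=2\rho_{\mathcal M_\tau}$ otherwise. *)

theory Defs
  imports "HOL-Analysis.Analysis"
begin

text \<open>Scale factor a (already extended evenly to the reals), with its derivatives
  a1 = a', a2 = a'', a3 = a''' on (0,infinity).\<close>

definition regular_scale_factor ::
  "(real \<Rightarrow> real) \<Rightarrow> (real \<Rightarrow> real) \<Rightarrow> (real \<Rightarrow> real) \<Rightarrow> bool" where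
  "regular_scale_factor a a1 a2 \<longleftrightarrow>
     a 0 = 0 \<and>
     (\<forall>t\<ge>0. a t \<ge> 0) \<and>
     strict_mono_on {0..} a \<and>
     continuous_on {0..} a \<and>
     (\<forall>t>0. (a has_real_derivative a1 t) (at t)) \<and>
     (\<forall>t>0. (a1 has_real_derivative a2 t) (at t)) \<and>
     continuous_on {0<..} a2 \<and>
     (\<forall>t>0. a1 t \<noteq> 0) \<and>
     (\<forall>t>0. a t * a2 t / (a1 t)\<^sup>2 \<le> 1)"

definition strongly_regular_scale_factor ::
  "(real \<Rightarrow> real) \<Rightarrow> (real \<Rightarrow> real) \<Rightarrow> (real \<Rightarrow> real) \<Rightarrow> bool" where
  "strongly_regular_scale_factor a a1 a2 \<longleftrightarrow>
     regular_scale_factor a a1 a2 \<and>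
     (\<exists>K\<ge>1. \<forall>t>0. a t * a2 t / (a1 t)\<^sup>2 \<ge> - K)"

definition rhoM :: "(real \<Rightarrow> real) \<Rightarrow> real \<Rightarrow> real" where
  "rhoM a \<tau> = integral {0..\<tau>} (\<lambda>t. a t / sqrt ((a \<tau>)\<^sup>2 - (a t)\<^sup>2))"

definition tzero :: "(real \<Rightarrow> real) \<Rightarrow> real \<Rightarrow> real \<Rightarrow> real" where
  "tzero a \<tau> \<rho> = (THE t0. t0 \<in> {-\<tau><..<\<tau>} \<and>
      \<bar>\<rho>\<bar> = integral {t0..\<tau>} (\<lambda>t. a t / sqrt ((a \<tau>)\<^sup>2 - (a t)\<^sup>2)))"

definition fpos :: "(real \<Rightarrow> real) \<Rightarrow> (real \<Rightarrow> real) \<Rightarrow> (real \<Rightarrow> real) \<Rightarrow> real \<Rightarrow> real \<Rightarrow> real" where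
  "fpos a a1 a2 \<tau> t0 = integral {t0..\<tau>}
     (\<lambda>t. a2 t / (a1 t)\<^sup>2 *
           (sqrt ((a \<tau>)\<^sup>2 - (a t0)\<^sup>2) / sqrt ((a \<tau>)\<^sup>2 - (a t)\<^sup>2) - 1))"

definition ffun :: "(real \<Rightarrow> real) \<Rightarrow> (real \<Rightarrow> real) \<Rightarrow> (real \<Rightarrow> real) \<Rightarrow> real \<Rightarrow> real \<Rightarrow> real" where
  "ffun a a1 a2 \<tau> t0 =
     (if 0 \<le> t0 then fpos a a1 a2 \<tau> t0
      else 2 * fpos a a1 a2 \<tau> 0 - fpos a a1 a2 \<tau> (- t0))"

definition gtt :: "(real \<Rightarrow> real) \<Rightarrow> (real \<Rightarrow> real) \<Rightarrow> (real \<Rightarrow> real) \<Rightarrow> real \<Rightarrow> real \<Rightarrow> real" where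
  "gtt a a1 a2 \<tau> \<rho> = - (1 - a1 \<tau> * ffun a a1 a2 \<tau> (tzero a \<tau> \<rho>))\<^sup>2"

end

theory Submission
  imports Defs
begin


locale SF =
  fixes a a1 a2 :: "real \<Rightarrow> real" and K :: real
  assumes a0: "a 0 = 0" and smono: "strict_mono_on {0..} a" and acont: "continuous_on {0..} a"
  and d1: "\<And>t. t>0 \<Longrightarrow> (a has_real_derivative a1 t) (at t)"
  and d2: "\<And>t. t>0 \<Longrightarrow> (a1 has_real_derivative a2 t) (at t)"
  and c2: "continuous_on {0<..} a2"
  and a1nz: "\<And>t. t>0 \<Longrightarrow> a1 t \<noteq> 0"
  and Kup: "\<And>t. t>0 \<Longrightarrow> a t * a2 t / (a1 t)^2 \<le> 1"
  and Klo: "\<And>t. t>0 \<Longrightarrow> a t * a2 t / (a1 t)^2 \<ge> -K"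
  and K1: "K \<ge> 1"
  and even: "\<And>t. a (-t) = a t"
  and lim0: "((\<lambda>t. a t / a1 t) \<longlongrightarrow> 0) (at_right 0)"
begin

lemma apos: "t > 0 \<Longrightarrow> a t > 0"
  using smono a0 by (metis atLeast_iff less_eq_real_def strict_mono_onD)

lemma apos': "t \<noteq> 0 \<Longrightarrow> a t > 0"
  by (metis apos even neg_0_less_iff_less linorder_neqE_linordered_idom)

lemma amono: "0 \<le> s \<Longrightarrow> s < t \<Longrightarrow> a s < a t"
  using smono by (simp add: strict_mono_on_def)

lemma amono_le: "0 \<le> s \<Longrightarrow> s \<le> t \<Longrightarrow> a s \<le> a t"
  using amono by (metis order_le_less)

lemma ainj: "0 \<le> s \<Longrightarrow> 0 \<le> t \<Longrightarrow> a s = a t \<Longrightarrow> s = t"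
  using amono by (metis linorder_neqE_linordered_idom less_irrefl)

lemma a1pos: assumes "t > 0" shows "a1 t > 0"
proof (rule ccontr)
  assume "\<not> a1 t > 0"
  with a1nz[OF assms] have "a1 t < 0" by linarith
  from DERIV_neg_dec_right[OF d1[OF assms] this] obtain d where d: "d > 0" "\<forall>h>0. h < d \<longrightarrow> a t > a (t + h)" by blast
  have "a t > a (t + d/2)" using d by auto
  moreover have "a t < a (t + d/2)" using amono[of t "t + d/2"] assms d by auto
  ultimately show False by linarith
qed

lemma acont_at: "t > 0 \<Longrightarrow> isCont a t"
  using d1 DERIV_isCont by blast

lemma a1cont_at: "t > 0 \<Longrightarrow> isCont a1 t"
  using d2 DERIV_isCont by blast

lemma a2cont_at: "t > 0 \<Longrightarrow> isCont a2 t"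
  using c2 by (simp add: continuous_on_eq_continuous_at)

lemma a_right0: "(a \<longlongrightarrow> 0) (at_right 0)"
proof -
  have "(a \<longlongrightarrow> a 0) (at 0 within {0..})"
    using acont by (simp add: continuous_on_def)
  then have "(a \<longlongrightarrow> a 0) (at 0 within {0<..})"
    by (rule tendsto_within_subset) auto
  then show ?thesis using a0 by simp
qed

end


context SF begin

definition "b = the_inv_into {0..} a"
definition "psi s = s / a1 (b s)"
definition "chi s = psi s * (1 - s * a2 (b s) / (a1 (b s))^2)"

lemma ainj_on: "inj_on a {0..}"
  using smono strict_mono_on_imp_inj_on by blast

lemma b_a: "t \<ge> 0 \<Longrightarrow> b (a t) = t"
  unfolding b_def using ainj_on by (simp add: the_inv_into_f_f)

lemma a_image: assumes "T \<ge> 0" shows "a ` {0..T} = {0..a T}"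
proof
  show "a ` {0..T} \<subseteq> {0..a T}"
  proof
    fix y assume "y \<in> a ` {0..T}"
    then obtain x where x: "0 \<le> x" "x \<le> T" "y = a x" by auto
    have "a 0 \<le> a x" "a x \<le> a T" using x by (auto intro: amono_le)
    then show "y \<in> {0..a T}" using x a0 by auto
  qed
  show "{0..a T} \<subseteq> a ` {0..T}"
  proof
    fix s assume s: "s \<in> {0..a T}"
    have "continuous_on {0..T} a" using acont by (rule continuous_on_subset) auto
    then obtain x where "0 \<le> x" "x \<le> T" "a x = s"
      using IVT'[of a 0 s T] s a0 assms by auto
    then show "s \<in> a ` {0..T}" by auto
  qed
qed

lemma a_b: assumes "T \<ge> 0" "0 \<le> s" "s \<le> a T" shows "a (b s) = s" "0 \<le> b s" "b s \<le> T"
proof -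
  from assms a_image obtain x where x: "x \<in> {0..T}" "s = a x" by (metis atLeastAtMost_iff image_iff)
  then have "b s = x" using b_a by auto
  then show "a (b s) = s" "0 \<le> b s" "b s \<le> T" using x by auto
qed

lemma b_cont: assumes "T \<ge> 0" shows "continuous_on {0..a T} b"
proof -
  have "continuous_on (a ` {0..T}) b"
    by (rule continuous_on_inv) (use acont b_a in \<open>auto intro: continuous_on_subset\<close>)
  then show ?thesis using a_image[OF assms] by simp
qed

lemma b_pos: assumes "T \<ge> 0" "0 < s" "s \<le> a T" shows "b s > 0"
  using a_b[OF assms(1), of s] assms a0 by (metis less_eq_real_def less_irrefl)

lemma b_deriv: assumes "T \<ge> 0" "0 < s" "s < a T"
  shows "(b has_real_derivative inverse (a1 (b s))) (at s)"
proof (rule DERIV_inverse_function[where f=a and a=0 and b="a T"])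
  show "(a has_real_derivative a1 (b s)) (at (b s))" using d1 b_pos assms by simp
  show "a1 (b s) \<noteq> 0" using a1nz b_pos assms by simp
  show "0 < s" "s < a T" using assms by auto
  show "\<And>y. 0 < y \<Longrightarrow> y < a T \<Longrightarrow> a (b y) = y" using a_b assms by auto
  show "isCont b s"
    using continuous_on_interior[OF b_cont[OF assms(1)], of s] assms by simp
qed

lemma psi_deriv: assumes "T \<ge> 0" "0 < s" "s < a T"
  shows "(psi has_real_derivative chi s / s) (at s)"
proof -
  have bp: "b s > 0" using b_pos assms by simp
  have ab: "a (b s) = s" using a_b assms by simp
  have n: "a1 (b s) \<noteq> 0" using a1nz bp by simp
  have db: "(b has_real_derivative inverse (a1 (b s))) (at s)" using b_deriv assms by simp
  have da1: "(a1 has_real_derivative a2 (b s)) (at (b s))" using d2 bp by simp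
  have "((\<lambda>s. s / a1 (b s)) has_real_derivative
        (1 * a1 (b s) - s * (a2 (b s) * inverse (a1 (b s)))) / (a1 (b s) * a1 (b s))) (at s)"
    by (rule DERIV_divide[OF DERIV_ident DERIV_chain2[OF da1 db] n])
  then show ?thesis unfolding psi_def[abs_def]
    by (rule DERIV_cong) (use n assms in \<open>simp add: chi_def psi_def field_simps power2_eq_square\<close>)
qed

end

context SF begin

lemma b0: "b 0 = 0" using b_a[of 0] a0 by simp

lemma b_filter: assumes "T > 0" shows "filterlim b (at_right 0) (at 0 within {0..a T})"
proof (rule tendsto_imp_filterlim_at_right)
  have "(b \<longlongrightarrow> b 0) (at 0 within {0..a T})"
    using b_cont[of T] assms apos[OF assms] by (simp add: continuous_on_def)
  then show "(b \<longlongrightarrow> 0) (at 0 within {0..a T})" using b0 by simp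
  show "\<forall>\<^sub>F x in at 0 within {0..a T}. 0 < b x"
    unfolding eventually_at_filter
    by (rule always_eventually) (use b_pos[of T] assms in auto)
qed

lemma comp_b_tendsto: assumes "T > 0" "x \<in> {0..a T}" "isCont h (b x)"
  shows "((\<lambda>s. h (b s)) \<longlongrightarrow> h (b x)) (at x within {0..a T})"
proof -
  have c: "continuous_on {0..a T} b" using b_cont assms(1) by simp
  have "(b \<longlongrightarrow> b x) (at x within {0..a T})"
    using c assms(2) unfolding continuous_on_def by blast
  then show ?thesis by (rule isCont_tendsto_compose[OF assms(3)])
qed

lemma psi_cont: assumes "T > 0" shows "continuous_on {0..a T} psi"
  unfolding continuous_on_eq_continuous_within
proof
  fix x assume x: "x \<in> {0..a T}"
  show "continuous (at x within {0..a T}) psi"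
  proof (cases "x = 0")
    case True
    have lim: "((\<lambda>s. a (b s) / a1 (b s)) \<longlongrightarrow> 0) (at 0 within {0..a T})"
      using filterlim_compose[OF lim0 b_filter[OF assms]] by simp
    have ev: "\<forall>\<^sub>F s in at 0 within {0..a T}. a (b s) / a1 (b s) = psi s"
      unfolding eventually_at_filter
      by (rule always_eventually) (use a_b[of T] assms in \<open>auto simp: psi_def\<close>)
    have "(psi \<longlongrightarrow> 0) (at 0 within {0..a T})"
      using tendsto_cong[OF ev] lim by (rule iffD1)
    then show ?thesis using True by (simp add: continuous_within psi_def)
  next
    case False
    then have xp: "x > 0" using x by auto
    have bp: "b x > 0" using b_pos[of T x] assms x xp by auto
    have "((\<lambda>s. a1 (b s)) \<longlongrightarrow> a1 (b x)) (at x within {0..a T})"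
      using comp_b_tendsto[OF assms x a1cont_at[OF bp]] .
    then have "((\<lambda>s. s / a1 (b s)) \<longlongrightarrow> x / a1 (b x)) (at x within {0..a T})"
      using a1nz[OF bp] by (intro tendsto_intros) auto
    then show ?thesis by (simp add: continuous_within psi_def[abs_def])
  qed
qed

lemma ratio_bound: assumes "T > 0" "0 < s" "s \<le> a T"
  shows "-K \<le> s * a2 (b s) / (a1 (b s))^2" "s * a2 (b s) / (a1 (b s))^2 \<le> 1"
proof -
  have bp: "b s > 0" using b_pos[of T s] assms by auto
  have "a (b s) = s" using a_b[of T s] assms by auto
  then show "-K \<le> s * a2 (b s) / (a1 (b s))^2" "s * a2 (b s) / (a1 (b s))^2 \<le> 1"
    using Klo[OF bp] Kup[OF bp] by auto
qed

lemma chi_cont: assumes "T > 0" shows "continuous_on {0..a T} chi"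
  unfolding continuous_on_eq_continuous_within
proof
  fix x assume x: "x \<in> {0..a T}"
  show "continuous (at x within {0..a T}) chi"
  proof (cases "x = 0")
    case True
    have "(psi \<longlongrightarrow> psi 0) (at 0 within {0..a T})"
    proof -
      have "0 \<in> {0..a T}" using apos[OF assms] by auto
      then show ?thesis using psi_cont[OF assms] unfolding continuous_on_def by blast
    qed
    then have p0: "(psi \<longlongrightarrow> 0) (at 0 within {0..a T})" by (simp add: psi_def)
    have lim: "((\<lambda>s. \<bar>psi s\<bar> * (1 + K)) \<longlongrightarrow> 0) (at 0 within {0..a T})"
      using tendsto_mult_left_zero[OF tendsto_rabs_zero[OF p0]] .
    have ev: "\<forall>\<^sub>F s in at 0 within {0..a T}. norm (chi s) \<le> \<bar>psi s\<bar> * (1 + K)"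
      unfolding eventually_at_filter
    proof (rule always_eventually, intro allI impI)
      fix s assume s: "s \<noteq> 0" "s \<in> {0..a T}"
      then have "-K \<le> s * a2 (b s) / (a1 (b s))^2" "s * a2 (b s) / (a1 (b s))^2 \<le> 1"
        using ratio_bound assms by auto
      then have "\<bar>1 - s * a2 (b s) / (a1 (b s))^2\<bar> \<le> 1 + K" by auto
      then have "\<bar>psi s\<bar> * \<bar>1 - s * a2 (b s) / (a1 (b s))^2\<bar> \<le> \<bar>psi s\<bar> * (1 + K)"
        by (rule mult_left_mono) auto
      then show "norm (chi s) \<le> \<bar>psi s\<bar> * (1 + K)"
        unfolding chi_def real_norm_def abs_mult .
    qed
    have "(chi \<longlongrightarrow> 0) (at 0 within {0..a T})"
      using ev lim by (rule Lim_null_comparison)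
    then show ?thesis using True by (simp add: continuous_within chi_def psi_def)
  next
    case False
    then have xp: "x > 0" using x by auto
    have bp: "b x > 0" using b_pos[of T x] assms x xp by auto
    have t1: "((\<lambda>s. a1 (b s)) \<longlongrightarrow> a1 (b x)) (at x within {0..a T})"
      using comp_b_tendsto[OF assms x a1cont_at[OF bp]] .
    have t2: "((\<lambda>s. a2 (b s)) \<longlongrightarrow> a2 (b x)) (at x within {0..a T})"
      using comp_b_tendsto[OF assms x a2cont_at[OF bp]] .
    have "((\<lambda>s. s / a1 (b s) * (1 - s * a2 (b s) / (a1 (b s))^2)) \<longlongrightarrow>
           x / a1 (b x) * (1 - x * a2 (b x) / (a1 (b x))^2)) (at x within {0..a T})"
      using a1nz[OF bp] by (intro tendsto_intros t1 t2) auto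
    then show ?thesis by (simp add: continuous_within chi_def[abs_def] psi_def[abs_def])
  qed
qed

end

context SF begin

lemma sqrt_scale: assumes "A > 0" shows "sqrt (1 - (y / A)^2) = sqrt (A^2 - y^2) / A"
proof -
  have "1 - (y / A)^2 = (A^2 - y^2) / A^2" using assms by (simp add: field_simps)
  then have "sqrt (1 - (y / A)^2) = sqrt (A^2 - y^2) / sqrt (A^2)" by (simp add: real_sqrt_divide)
  also have "sqrt (A^2) = A" using assms by simp
  finally show ?thesis .
qed

lemma subst_int:
  assumes tp: "0 < tp" and F: "continuous_on {0..a tp} F"
  shows "((\<lambda>x. a1 x / sqrt ((a tp)^2 - (a x)^2) * F (a x)) has_integral
          integral {0..pi/2} (\<lambda>\<theta>. F (a tp * sin \<theta>))) {0..tp}"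
proof -
  define A where "A = a tp"
  have Ap: "A > 0" using apos tp A_def by simp
  define g where "g x = arcsin (a x / A)" for x
  define g' where "g' x = a1 x / A * inverse (sqrt (1 - (a x / A)^2))" for x
  have rng: "0 \<le> a x / A \<and> a x / A \<le> 1" if "x \<in> {0..tp}" for x
  proof -
    have "a 0 \<le> a x" "a x \<le> a tp" using that by (auto intro: amono_le)
    then show ?thesis using a0 Ap A_def by auto
  qed
  have sub: "g ` {0..tp} \<subseteq> {0..pi/2}"
  proof
    fix y assume "y \<in> g ` {0..tp}"
    then obtain x where x: "x \<in> {0..tp}" "y = g x" by auto
    have "arcsin 0 \<le> arcsin (a x / A)" using rng[OF x(1)] by (intro arcsin_le_arcsin) auto
    moreover have "arcsin (a x / A) \<le> pi/2" using rng[OF x(1)] by (intro arcsin_ubound) auto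
    ultimately show "y \<in> {0..pi/2}" using x g_def by auto
  qed
  have fc: "continuous_on {0..pi/2} (\<lambda>\<theta>. F (A * sin \<theta>))"
  proof (rule continuous_on_compose2[OF F])
    show "continuous_on {0..pi/2} (\<lambda>\<theta>. A * sin \<theta>)" by (intro continuous_intros)
    show "(\<lambda>\<theta>. A * sin \<theta>) ` {0..pi/2} \<subseteq> {0..a tp}"
    proof
      fix y assume "y \<in> (\<lambda>\<theta>. A * sin \<theta>) ` {0..pi/2}"
      then obtain t where t: "t \<in> {0..pi/2}" "y = A * sin t" by auto
      have "0 \<le> sin t" using t by (intro sin_ge_zero) auto
      moreover have "sin t \<le> 1" by simp
      ultimately show "y \<in> {0..a tp}" using t Ap A_def by (auto simp: mult_left_le)
    qed
  qed
  have gc: "continuous_on {0..tp} g"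
    unfolding g_def
  proof (rule continuous_on_arcsin)
    have "continuous_on {0..tp} a" using acont by (rule continuous_on_subset) auto
    then show "continuous_on {0..tp} (\<lambda>x. a x / A)" using Ap by (intro continuous_intros) auto
    show "\<forall>x\<in>{0..tp}. - 1 \<le> a x / A \<and> a x / A \<le> 1" using rng by force
  qed
  have gd: "(g has_field_derivative g' x) (at x within {0..tp})" if x: "x \<in> {0..tp} - {0, tp}" for x
  proof -
    have xp: "0 < x" "x < tp" using x by auto
    have "a x < a tp" using amono xp by auto
    moreover have "0 < a x" using apos[OF xp(1)] .
    ultimately have r: "-1 < a x / A" "a x / A < 1" using Ap A_def by (auto simp: field_simps)
    have "((\<lambda>x. a x / A) has_field_derivative a1 x / A) (at x)"
      using d1[OF xp(1)] Ap by (intro derivative_eq_intros) auto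
    from DERIV_chain2[OF DERIV_arcsin[OF r] this]
    have "(g has_field_derivative g' x) (at x)" unfolding g_def g'_def by (simp add: mult.commute)
    then show ?thesis by (rule has_field_derivative_at_within)
  qed
  have main: "((\<lambda>x. g' x *\<^sub>R (\<lambda>\<theta>. F (A * sin \<theta>)) (g x)) has_integral
     (integral {g 0..g tp} (\<lambda>\<theta>. F (A * sin \<theta>)) - integral {g tp..g 0} (\<lambda>\<theta>. F (A * sin \<theta>)))) {0..tp}"
    by (rule has_integral_substitution_general[where s="{0, tp}", OF _ _ sub fc gc gd]) (use tp in auto)
  have g0: "g 0 = 0" using a0 g_def by simp
  have gt: "g tp = pi/2" using Ap A_def g_def by simp
  have main2: "((\<lambda>x. g' x *\<^sub>R (\<lambda>\<theta>. F (A * sin \<theta>)) (g x)) has_integral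
     integral {0..pi/2} (\<lambda>\<theta>. F (A * sin \<theta>))) {0..tp}"
    using main g0 gt by simp
  show ?thesis
  proof (rule has_integral_spike_finite[OF _ _ main2[unfolded A_def]])
    show "finite {0, tp}" by simp
    fix x assume x: "x \<in> {0..tp} - {0, tp}"
    then have r: "0 \<le> a x / A \<and> a x / A \<le> 1" using rng by auto
    have "A * sin (g x) = a x" unfolding g_def using r Ap by simp
    moreover have "g' x = a1 x / sqrt (A^2 - (a x)^2)"
      unfolding g'_def using sqrt_scale[OF Ap, of "a x"] Ap by (simp add: field_simps)
    ultimately show "a1 x / sqrt ((a tp)\<^sup>2 - (a x)\<^sup>2) * F (a x) =
      g' x *\<^sub>R (\<lambda>\<theta>. F (a tp * sin \<theta>)) (g x)" using A_def by simp
  qed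
qed

end

context SF begin

definition "R A = integral {0..pi/2} (\<lambda>\<theta>. psi (A * sin \<theta>))"
definition "R' A = integral {0..pi/2} (\<lambda>\<theta>. chi (A * sin \<theta>) / A)"

lemma psi_a: "x > 0 \<Longrightarrow> psi (a x) = a x / a1 x"
  using b_a by (simp add: psi_def)

lemma chi_a: "x > 0 \<Longrightarrow> chi (a x) = a x / a1 x * (1 - a x * a2 x / (a1 x)^2)"
  using b_a by (simp add: chi_def psi_def)

lemma rho_hasint: assumes tp: "0 < tp"
  shows "((\<lambda>x. a x / sqrt ((a tp)^2 - (a x)^2)) has_integral R (a tp)) {0..tp}"
proof -
  have "((\<lambda>x. a1 x / sqrt ((a tp)^2 - (a x)^2) * psi (a x)) has_integral R (a tp)) {0..tp}"
    unfolding R_def by (rule subst_int[OF tp psi_cont[OF tp]])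
  then show ?thesis
  proof (rule has_integral_spike_finite[rotated 2])
    show "finite {0, tp}" by simp
    fix x assume "x \<in> {0..tp} - {0, tp}"
    then have xp: "x > 0" by auto
    show "a x / sqrt ((a tp)\<^sup>2 - (a x)\<^sup>2) = a1 x / sqrt ((a tp)\<^sup>2 - (a x)\<^sup>2) * psi (a x)"
      using psi_a[OF xp] a1nz[OF xp] by simp
  qed
qed

lemma rhoM_R: "0 < tp \<Longrightarrow> rhoM a tp = R (a tp)"
  unfolding rhoM_def using rho_hasint by (simp add: integral_unique)

lemma R_deriv: assumes T: "T > 0" and A: "0 < A" "A < a T"
  shows "(R has_real_derivative R' A) (at A)"
proof -
  define U where "U = {0<..<a T}"
  have sin_rng: "0 \<le> sin t \<and> sin t \<le> 1" if "t \<in> {0..pi/2}" for t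
    using that by (auto intro: sin_ge_zero)
  have prod_rng: "x * sin t \<in> {0..a T}" if "x \<in> U" "t \<in> {0..pi/2}" for x t
  proof -
    have h1: "x * sin t \<le> x * 1" using sin_rng[OF that(2)] that(1) U_def by (intro mult_left_mono) auto
    have h2: "x < a T" "0 < x" using that(1) U_def by auto
    have h3: "0 \<le> x * sin t" using sin_rng[OF that(2)] h2 by simp
    have "x * sin t \<le> a T" using h1 h2 by linarith
    then show ?thesis using h3 by simp
  qed
  have "((\<lambda>x. integral (cbox 0 (pi/2)) (\<lambda>t. psi (x * sin t))) has_field_derivative
          integral (cbox 0 (pi/2)) (\<lambda>t. chi (A * sin t) / A)) (at A within U)"
  proof (rule leibniz_rule_field_derivative[where fx="\<lambda>x t. chi (x * sin t) / x"])
    fix x t assume x: "x \<in> U" and t: "t \<in> cbox 0 (pi/2)"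
    then have t': "t \<in> {0..pi/2}" by simp
    have xp: "x > 0" "x < a T" using x U_def by auto
    show "((\<lambda>x. psi (x * sin t)) has_field_derivative chi (x * sin t) / x) (at x within U)"
    proof (cases "sin t = 0")
      case True
      have "chi 0 = 0" by (simp add: chi_def psi_def)
      then show ?thesis using True by simp
    next
      case False
      then have sp: "sin t > 0" using sin_rng[OF t'] by auto
      have s1: "0 < x * sin t" using sp xp by simp
      have "x * sin t \<le> x * 1" using sin_rng[OF t'] xp by (intro mult_left_mono) auto
      then have s2: "x * sin t < a T" using xp by linarith
      have dl: "((\<lambda>x. x * sin t) has_real_derivative sin t) (at x)"
        by (auto intro!: derivative_eq_intros)
      have "((\<lambda>x. psi (x * sin t)) has_field_derivative chi (x * sin t) / (x * sin t) * sin t) (at x)"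
        by (rule DERIV_chain2[OF psi_deriv[OF less_imp_le[OF T] s1 s2] dl])
      then have "((\<lambda>x. psi (x * sin t)) has_field_derivative chi (x * sin t) / x) (at x)"
        using sp by simp
      then show ?thesis by (rule has_field_derivative_at_within)
    qed
  next
    fix x assume x: "x \<in> U"
    have "continuous_on {0..pi/2} (\<lambda>t. psi (x * sin t))"
      by (rule continuous_on_compose2[OF psi_cont[OF T]]) (use prod_rng x in \<open>auto intro!: continuous_intros\<close>)
    then show "(\<lambda>t. psi (x * sin t)) integrable_on cbox 0 (pi/2)"
      using integrable_continuous_interval by simp
  next
    have c1: "continuous_on (U \<times> {0..pi/2}) (\<lambda>p. chi (fst p * sin (snd p)))"
      by (rule continuous_on_compose2[OF chi_cont[OF T]]) (use prod_rng in \<open>auto intro!: continuous_intros\<close>)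
    have "continuous_on (U \<times> {0..pi/2}) (\<lambda>p. chi (fst p * sin (snd p)) / fst p)"
      using U_def by (intro continuous_intros c1) auto
    then show "continuous_on (U \<times> cbox 0 (pi/2)) (\<lambda>(x, t). chi (x * sin t) / x)"
      by (simp add: case_prod_beta)
  next
    show "A \<in> U" "convex U" using A U_def by auto
  qed
  then have "(R has_field_derivative R' A) (at A within U)"
    unfolding R_def[abs_def] R'_def by simp
  moreover have "at A within U = at A" by (rule at_within_open) (use U_def A in auto)
  ultimately show ?thesis by simp
qed

end

context SF begin

lemma sqrt_bound: assumes "0 < A" "0 \<le> y" "y \<le> A"
  shows "0 \<le> A - sqrt (A^2 - y^2)" "A - sqrt (A^2 - y^2) \<le> y^2 / A"
proof -
  have "sqrt (A^2 - y^2) \<le> sqrt (A^2)" using assms by (intro real_sqrt_le_mono) auto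
  then show "0 \<le> A - sqrt (A^2 - y^2)" using assms by simp
  have y2: "y^2 \<le> A^2" using assms by (intro power_mono) auto
  have "(A - y^2 / A)^2 = A^2 - y^2 - y^2 * (A^2 - y^2) / A^2"
    using assms by (simp add: field_simps power2_eq_square)
  also have "\<dots> \<le> A^2 - y^2" using y2 assms by (simp add: divide_nonneg_nonneg)
  finally have "A - y^2 / A \<le> sqrt (A^2 - y^2)" by (rule real_le_rsqrt)
  then show "A - sqrt (A^2 - y^2) \<le> y^2 / A" by simp
qed

lemma h_int: assumes tp: "0 < tp"
  shows "((\<lambda>t. a t / sqrt ((a tp)^2 - (a t)^2) - (a tp - sqrt ((a tp)^2 - (a t)^2)) * a2 t / (a1 t)^2)
          has_integral a tp / a1 tp) {0..tp}"
proof -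
  define A where "A = a tp"
  have Ap: "A > 0" using apos tp A_def by simp
  define h where "h t = (if t = 0 then 0 else (A - sqrt (A^2 - (a t)^2)) / a1 t)" for t
  define h2 where "h2 t = (A - sqrt (A^2 - (a t)^2)) / a1 t" for t
  have arng: "0 \<le> a t \<and> a t \<le> A" if "t \<in> {0..tp}" for t
  proof -
    have "a 0 \<le> a t" "a t \<le> a tp" using that by (auto intro: amono_le)
    then show ?thesis using a0 A_def by auto
  qed
  have hc: "continuous_on {0..tp} h"
    unfolding continuous_on_eq_continuous_within
  proof
    fix x assume x: "x \<in> {0..tp}"
    show "continuous (at x within {0..tp}) h"
    proof (cases "x = 0")
      case True
      have lim1: "((\<lambda>t. a t * (a t / a1 t) / A) \<longlongrightarrow> 0 * 0 / A) (at_right 0)"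
        by (intro tendsto_intros a_right0 lim0) (use Ap in auto)
      have ev: "\<forall>\<^sub>F t in at_right 0. norm (h t) \<le> a t * (a t / a1 t) / A"
        unfolding eventually_at_filter
      proof -
        have "\<forall>\<^sub>F t in nhds 0. t \<in> {-tp<..<tp}"
          by (rule eventually_nhds_in_open) (use tp in auto)
        then show "\<forall>\<^sub>F t in nhds 0. t \<noteq> 0 \<longrightarrow> t \<in> {0<..} \<longrightarrow> norm (h t) \<le> a t * (a t / a1 t) / A"
        proof (rule eventually_mono, intro impI)
          fix t assume t: "t \<in> {-tp<..<tp}" "t \<noteq> 0" "t \<in> {0<..}"
          then have tt: "t \<in> {0..tp}" "t > 0" by auto
          have b: "0 \<le> A - sqrt (A^2 - (a t)^2)" "A - sqrt (A^2 - (a t)^2) \<le> (a t)^2 / A"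
            using sqrt_bound[OF Ap, of "a t"] arng[OF tt(1)] by auto
          have a1p: "a1 t > 0" using a1pos tt by simp
          have "norm (h t) = (A - sqrt (A^2 - (a t)^2)) / a1 t" using b a1p tt h_def by simp
          also have "\<dots> \<le> (a t)^2 / A / a1 t" using b a1p by (intro divide_right_mono) auto
          also have "\<dots> = a t * (a t / a1 t) / A" by (simp add: power2_eq_square)
          finally show "norm (h t) \<le> a t * (a t / a1 t) / A" .
        qed
      qed
      have "(h \<longlongrightarrow> 0) (at_right 0)" using Lim_null_comparison[OF ev] lim1 by simp
      then have "(h \<longlongrightarrow> h 0) (at 0 within {0..tp})"
        using tp by (simp add: at_within_Icc_at_right h_def)
      then show ?thesis using True by (simp add: continuous_within)
    next
      case False
      then have xp: "x > 0" using x by auto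
      have "isCont h2 x" unfolding h2_def
        using acont_at[OF xp] a1cont_at[OF xp] a1nz[OF xp] by (intro continuous_intros) auto
      moreover have "\<forall>\<^sub>F t in nhds x. h2 t = h t"
      proof -
        have "\<forall>\<^sub>F t in nhds x. t \<in> {0<..}" by (rule eventually_nhds_in_open) (use xp in auto)
        then show ?thesis by (rule eventually_mono) (auto simp: h_def h2_def)
      qed
      ultimately have "isCont h x" using isCont_cong by blast
      then show ?thesis by (rule continuous_at_imp_continuous_within)
    qed
  qed
  have hd: "(h has_vector_derivative
     (a x / sqrt (A^2 - (a x)^2) - (A - sqrt (A^2 - (a x)^2)) * a2 x / (a1 x)^2)) (at x)"
    if x: "x \<in> {0<..<tp}" for x
  proof -
    have xp: "x > 0" "x < tp" using x by auto
    have ax: "a x < A" "0 < a x" using amono[of x tp] xp A_def apos by auto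
    have pos: "0 < A^2 - (a x)^2" using ax by (simp add: power_strict_mono)
    define S where "S = sqrt (A^2 - (a x)^2)"
    have Sp: "S > 0" using pos S_def by simp
    have S2: "S^2 = A^2 - (a x)^2" using pos S_def by simp
    have n: "a1 x \<noteq> 0" using a1nz xp by simp
    have di: "((\<lambda>x. A^2 - (a x)^2) has_real_derivative (- (2 * a x * a1 x))) (at x)"
      using d1[OF xp(1)] by (auto intro!: derivative_eq_intros)
    have ds: "((\<lambda>x. sqrt (A^2 - (a x)^2)) has_real_derivative
        inverse (sqrt (A^2 - (a x)^2)) / 2 * (- (2 * a x * a1 x))) (at x)"
      by (rule DERIV_chain2[OF DERIV_real_sqrt[OF pos] di])
    have "(h2 has_real_derivative
       ((0 - inverse (sqrt (A^2 - (a x)^2)) / 2 * (- (2 * a x * a1 x))) * a1 x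
         - (A - sqrt (A^2 - (a x)^2)) * a2 x) / (a1 x * a1 x)) (at x)"
      unfolding h2_def
      by (rule DERIV_divide[OF DERIV_diff[OF DERIV_const ds] d2[OF xp(1)] n])
    then have "(h2 has_real_derivative
       (a x / sqrt (A^2 - (a x)^2) - (A - sqrt (A^2 - (a x)^2)) * a2 x / (a1 x)^2)) (at x)"
    proof (rule DERIV_cong)
      show "((0 - inverse (sqrt (A^2 - (a x)^2)) / 2 * (- (2 * a x * a1 x))) * a1 x
         - (A - sqrt (A^2 - (a x)^2)) * a2 x) / (a1 x * a1 x) =
         a x / sqrt (A^2 - (a x)^2) - (A - sqrt (A^2 - (a x)^2)) * a2 x / (a1 x)^2"
        unfolding S_def[symmetric] using Sp n by (simp add: field_simps power2_eq_square)
    qed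
    then have "(h has_real_derivative
       (a x / sqrt (A^2 - (a x)^2) - (A - sqrt (A^2 - (a x)^2)) * a2 x / (a1 x)^2)) (at x)"
      by (rule has_field_derivative_transform_within_open[where S="{0<..}"]) (use xp h_def h2_def in auto)
    then show ?thesis by (simp add: has_real_derivative_iff_has_vector_derivative)
  qed
  have "((\<lambda>x. a x / sqrt (A^2 - (a x)^2) - (A - sqrt (A^2 - (a x)^2)) * a2 x / (a1 x)^2)
     has_integral (h tp - h 0)) {0..tp}"
    by (rule fundamental_theorem_of_calculus_interior[OF _ hc hd]) (use tp in auto)
  moreover have "h tp - h 0 = A / a1 tp" using tp A_def by (simp add: h_def)
  ultimately show ?thesis using A_def by simp
qed

end

context SF begin

lemma alg: fixes S A c y d :: real
  assumes "S > 0" "A > 0" "c \<noteq> 0" "S^2 = A^2 - y^2"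
  shows "d / c^2 * (A / S - 1) =
     (y / S - (A - S) * d / c^2) * (1 / A) - c / S * (y / c * (1 - y * d / c^2) / A)"
proof -
  have yy: "y^2 = A^2 - S^2" using assms by simp
  have "(y / S - (A - S) * d / c^2) * (1 / A) - c / S * (y / c * (1 - y * d / c^2) / A)
      = d / c^2 * ((y^2 - (A - S) * S) / (A * S))"
    using assms(1-3) by (simp add: field_simps power2_eq_square)
  also have "y^2 - (A - S) * S = A * (A - S)" using yy by (simp add: algebra_simps power2_eq_square)
  also have "d / c^2 * ((A * (A - S)) / (A * S)) = d / c^2 * (A / S - 1)"
    using assms(1-3) by (simp add: field_simps)
  finally show ?thesis by simp
qed

lemma fpos_eq: assumes tp: "0 < tp"
  shows "fpos a a1 a2 tp 0 = 1 / a1 tp - R' (a tp)"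
proof -
  define A where "A = a tp"
  have Ap: "A > 0" using apos tp A_def by simp
  have cc: "continuous_on {0..a tp} (\<lambda>s. chi s / A)"
    using chi_cont[OF tp] Ap by (intro continuous_intros) auto
  have I1: "((\<lambda>x. a1 x / sqrt ((a tp)^2 - (a x)^2) * (chi (a x) / A)) has_integral R' A) {0..tp}"
    using subst_int[OF tp cc] unfolding R'_def A_def by simp
  note I2 = h_int[OF tp]
  note I3 = has_integral_diff[OF has_integral_mult_left[OF I2, of "1 / A"] I1]
  have "((\<lambda>t. a2 t / (a1 t)^2 * (sqrt ((a tp)^2 - (a 0)^2) / sqrt ((a tp)^2 - (a t)^2) - 1))
        has_integral (a tp / a1 tp * (1 / A) - R' A)) {0..tp}"
  proof (rule has_integral_spike_finite[OF _ _ I3])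
    show "finite {0, tp}" by simp
    fix x assume x: "x \<in> {0..tp} - {0, tp}"
    then have xp: "0 < x" "x < tp" by auto
    have ax: "a x < A" "0 < a x" using amono[of x tp] xp A_def apos by auto
    have pos: "0 < A^2 - (a x)^2" using ax by (simp add: power_strict_mono)
    have n: "a1 x \<noteq> 0" using a1nz xp by simp
    have "sqrt ((a tp)^2 - (a 0)^2) = A" using a0 Ap A_def by simp
    then show "a2 x / (a1 x)^2 * (sqrt ((a tp)^2 - (a 0)^2) / sqrt ((a tp)^2 - (a x)^2) - 1) =
      (a x / sqrt ((a tp)\<^sup>2 - (a x)\<^sup>2) -
         (a tp - sqrt ((a tp)\<^sup>2 - (a x)\<^sup>2)) * a2 x / (a1 x)\<^sup>2) * (1 / A) -
        a1 x / sqrt ((a tp)\<^sup>2 - (a x)\<^sup>2) * (chi (a x) / A)"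
      unfolding chi_a[OF xp(1)] A_def[symmetric]
      using alg[of "sqrt (A^2 - (a x)^2)" A "a1 x" "a x" "a2 x"] pos Ap n by simp
  qed
  then have "fpos a a1 a2 tp 0 = a tp / a1 tp * (1 / A) - R' A"
    unfolding fpos_def by (rule integral_unique)
  then show ?thesis using Ap A_def by simp
qed

end

context SF begin

lemma int_pos: fixes f :: "real \<Rightarrow> real"
  assumes "p < q" "continuous_on {p..q} f" "\<And>x. x \<in> {p..q} \<Longrightarrow> f x > 0"
  shows "integral {p..q} f > 0"
proof -
  obtain x0 where x0: "x0 \<in> {p..q}" "\<And>y. y \<in> {p..q} \<Longrightarrow> f x0 \<le> f y"
    using continuous_attains_inf[OF compact_Icc _ assms(2)] assms(1) by auto
  have "integral {p..q} (\<lambda>x. f x0) \<le> integral {p..q} f"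
    by (rule integral_le) (use x0 assms in \<open>auto intro: integrable_continuous_interval\<close>)
  moreover have "integral {p..q} (\<lambda>x. f x0) = (q - p) * f x0" using assms(1) by simp
  moreover have "(q - p) * f x0 > 0" using assms x0 by simp
  ultimately show ?thesis by linarith
qed

lemma a_nn: "0 \<le> a x"
  by (cases "x = 0") (use apos' a0 in \<open>auto intro: less_imp_le\<close>)

lemma acont_neg: "continuous_on {..0} a"
proof -
  have "continuous_on {..0} (\<lambda>x. a (- x))"
    by (rule continuous_on_compose2[OF acont]) (auto intro!: continuous_intros)
  then show ?thesis using even by simp
qed

lemma g_cont: assumes "tau > 0" "-tau < p" "p \<le> q" "q < tau" "q \<le> 0 \<or> 0 \<le> p"
  shows "continuous_on {p..q} (\<lambda>x. a x / sqrt ((a tau)^2 - (a x)^2))"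
proof -
  have ac: "continuous_on {p..q} a"
    using assms(5) acont_neg acont by (auto intro: continuous_on_subset)
  have lt: "a x < a tau" if "x \<in> {p..q}" for x
  proof -
    have "a x = a \<bar>x\<bar>" using even by (simp add: abs_if)
    also have "\<dots> < a tau" using that assms by (intro amono) auto
    finally show ?thesis .
  qed
  have nz: "sqrt ((a tau)^2 - (a x)^2) \<noteq> 0" if "x \<in> {p..q}" for x
  proof -
    have "(a x)^2 < (a tau)^2" using lt[OF that] a_nn[of x] by (intro power_strict_mono) auto
    then show ?thesis by simp
  qed
  show ?thesis by (intro continuous_intros ac) (use nz in auto)
qed

lemma g_pos: assumes "tau > 0" "x \<noteq> 0" "\<bar>x\<bar> < tau"
  shows "a x / sqrt ((a tau)^2 - (a x)^2) > 0"
proof -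
  have "a x = a \<bar>x\<bar>" using even by (simp add: abs_if)
  also have "\<dots> < a tau" using assms by (intro amono) auto
  finally have "a x < a tau" .
  moreover have "a x > 0" using apos' assms by simp
  ultimately show ?thesis by (simp add: power_strict_mono)
qed

lemma tzero0: assumes tau: "tau > 0" shows "tzero a tau (rhoM a tau) = 0"
proof -
  define g where "g x = a x / sqrt ((a tau)^2 - (a x)^2)" for x
  have int0: "(g has_integral rhoM a tau) {0..tau}"
    using rho_hasint[OF tau] rhoM_R[OF tau] unfolding g_def by simp
  have gi: "g integrable_on {0..tau}" using int0 by blast
  have gnn: "g x \<ge> 0" if "x \<in> {0..tau}" for x
  proof -
    have "a x \<le> a tau" using that by (intro amono_le) auto
    then have "(a x)^2 \<le> (a tau)^2" using a_nn by (intro power_mono) auto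
    then show ?thesis unfolding g_def by (intro divide_nonneg_nonneg a_nn real_sqrt_ge_zero) auto
  qed
  have rnn: "rhoM a tau \<ge> 0" using has_integral_nonneg[OF int0 gnn] .
  have rint: "integral {0..tau} g = rhoM a tau" using int0 by (rule integral_unique)
  show ?thesis
    unfolding tzero_def
  proof (rule the_equality)
    show "0 \<in> {- tau<..<tau} \<and> \<bar>rhoM a tau\<bar> = integral {0..tau} (\<lambda>t. a t / sqrt ((a tau)\<^sup>2 - (a t)\<^sup>2))"
      using tau rnn rint by (simp add: g_def[abs_def])
  next
    fix t0 assume t0: "t0 \<in> {- tau<..<tau} \<and> \<bar>rhoM a tau\<bar> = integral {t0..tau} (\<lambda>t. a t / sqrt ((a tau)\<^sup>2 - (a t)\<^sup>2))"
    then have eq: "rhoM a tau = integral {t0..tau} g" and rng: "-tau < t0" "t0 < tau"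
      using rnn by (auto simp: g_def[abs_def])
    show "t0 = 0"
    proof (rule ccontr)
      assume "t0 \<noteq> 0"
      then consider "t0 > 0" | "t0 < 0" by linarith
      then show False
      proof cases
        case 1
        have "integral {0..t0} g + integral {t0..tau} g = integral {0..tau} g"
          by (rule Henstock_Kurzweil_Integration.integral_combine) (use 1 rng gi in auto)
        moreover have "integral {0..t0} g > 0"
        proof -
          have gi2: "g integrable_on {0..t0}" by (rule integrable_subinterval_real[OF gi]) (use rng in auto)
          have "integral {0..t0/2} g + integral {t0/2..t0} g = integral {0..t0} g"
            by (rule Henstock_Kurzweil_Integration.integral_combine) (use 1 gi2 in auto)
          moreover have "integral {0..t0/2} g \<ge> 0"
            by (rule integral_nonneg) (use gi2 gnn rng in \<open>auto intro: integrable_subinterval_real\<close>)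
          moreover have "integral {t0/2..t0} g > 0"
            unfolding g_def
            by (rule int_pos) (use 1 rng tau in \<open>auto intro!: g_cont g_pos\<close>)
          ultimately show ?thesis by linarith
        qed
        ultimately show False using eq rint by linarith
      next
        case 2
        have gin: "g integrable_on {t0..0}"
          unfolding g_def by (rule integrable_continuous_interval, rule g_cont) (use 2 rng tau in auto)
        have gi3: "g integrable_on {t0..tau}"
          by (rule Henstock_Kurzweil_Integration.integrable_combine[OF _ _ gin gi]) (use 2 tau in auto)
        have "integral {t0..0} g + integral {0..tau} g = integral {t0..tau} g"
          by (rule Henstock_Kurzweil_Integration.integral_combine) (use 2 tau gi3 in auto)
        moreover have "integral {t0..0} g > 0"
        proof -
          have "integral {t0..t0/2} g + integral {t0/2..0} g = integral {t0..0} g"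
            by (rule Henstock_Kurzweil_Integration.integral_combine) (use 2 gin in auto)
          moreover have "integral {t0/2..0} g \<ge> 0"
          proof (rule integral_nonneg)
            show "g integrable_on {t0/2..0}"
              by (rule integrable_subinterval_real[OF gin]) (use 2 in auto)
            fix x assume x: "x \<in> {t0/2..0}"
            show "0 \<le> g x"
            proof (cases "x = 0")
              case True then show ?thesis using a0 g_def by simp
            next
              case False then show ?thesis using g_pos[OF tau False] x 2 rng g_def by auto
            qed
          qed
          moreover have "integral {t0..t0/2} g > 0"
            unfolding g_def
            by (rule int_pos) (use 2 rng tau in \<open>auto intro!: g_cont g_pos\<close>)
          ultimately show ?thesis by linarith
        qed
        ultimately show False using eq rint by linarith
      qed
    qed
  qed
qed

end

context SF begin

lemma main_loc: assumes tau: "tau > 0"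
  shows "\<exists>D. (rhoM a has_real_derivative D) (at tau) \<and> gtt a a1 a2 tau (rhoM a tau) + D\<^sup>2 = 0"
proof -
  define A where "A = a tau"
  have T: "2 * tau > 0" using tau by simp
  have A: "0 < A" "A < a (2 * tau)" using apos[OF tau] amono[of tau "2*tau"] tau A_def by auto
  have Rd: "(R has_real_derivative R' A) (at A)" by (rule R_deriv[OF T A])
  have "((\<lambda>t. R (a t)) has_real_derivative R' A * a1 tau) (at tau)"
    using DERIV_chain2[OF _ d1[OF tau]] Rd A_def by simp
  then have d: "(rhoM a has_real_derivative R' A * a1 tau) (at tau)"
    by (rule has_field_derivative_transform_within_open[where S="{0<..}"]) (use tau rhoM_R in auto)
  have "gtt a a1 a2 tau (rhoM a tau) = - (1 - a1 tau * (1 / a1 tau - R' A))\<^sup>2"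
    unfolding gtt_def tzero0[OF tau] ffun_def using fpos_eq[OF tau] A_def by simp
  also have "\<dots> = - (R' A * a1 tau)\<^sup>2" using a1nz[OF tau] by (simp add: field_simps)
  finally show ?thesis using d by auto
qed

end

lemma a1pos_gen:
  assumes smono: "strict_mono_on {0..} a"
    and d1: "\<forall>t>0. (a has_real_derivative a1 t) (at t)"
    and nz: "\<forall>t>0. a1 t \<noteq> 0" and t: "t > 0"
  shows "a1 t > 0"
proof (rule ccontr)
  assume "\<not> a1 t > 0"
  with nz t have "a1 t < 0" by force
  from DERIV_neg_dec_right[OF d1[rule_format, OF t] this] obtain d where
    d: "d > 0" "\<forall>h>0. h < d \<longrightarrow> a t > a (t + h)" by blast
  have "a t > a (t + d/2)" using d by auto
  moreover have "a t < a (t + d/2)" using smono t d by (auto simp: strict_mono_on_def)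
  ultimately show False by linarith
qed

lemma lim0_gen:
  fixes a a1 a2 :: "real \<Rightarrow> real"
  assumes a0: "a 0 = 0" and smono: "strict_mono_on {0..} a" and acont: "continuous_on {0..} a"
    and d1: "\<forall>t>0. (a has_real_derivative a1 t) (at t)"
    and d2: "\<forall>t>0. (a1 has_real_derivative a2 t) (at t)"
    and nz: "\<forall>t>0. a1 t \<noteq> 0"
    and init: "((a1 \<longlongrightarrow> 0) (at_right 0) \<and> (\<exists>\<epsilon>>0. \<forall>t\<in>{0<..<\<epsilon>}. a2 t \<ge> 0))
             \<or> (\<exists>L>0. (a1 \<longlongrightarrow> L) (at_right 0))"
  shows "((\<lambda>t. a t / a1 t) \<longlongrightarrow> 0) (at_right 0)"
proof -
  have ar: "(a \<longlongrightarrow> 0) (at_right 0)"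
  proof -
    have "(a \<longlongrightarrow> a 0) (at 0 within {0..})"
      using acont by (simp add: continuous_on_def)
    then have "(a \<longlongrightarrow> a 0) (at 0 within {0<..})"
      by (rule tendsto_within_subset) auto
    then show ?thesis using a0 by simp
  qed
  from init show ?thesis
  proof
    assume "\<exists>L>0. (a1 \<longlongrightarrow> L) (at_right 0)"
    then obtain L where L: "L > 0" "(a1 \<longlongrightarrow> L) (at_right 0)" by blast
    have "((\<lambda>t. a t / a1 t) \<longlongrightarrow> 0 / L) (at_right 0)"
      by (rule tendsto_divide[OF ar L(2)]) (use L in auto)
    then show ?thesis by simp
  next
    assume "(a1 \<longlongrightarrow> 0) (at_right 0) \<and> (\<exists>\<epsilon>>0. \<forall>t\<in>{0<..<\<epsilon>}. a2 t \<ge> 0)"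
    then obtain e where e: "e > 0" "\<And>t. 0 < t \<Longrightarrow> t < e \<Longrightarrow> a2 t \<ge> 0" by auto
    have bound: "norm (a t / a1 t) \<le> t" if t: "0 < t" "t < e" for t
    proof -
      have ct: "continuous_on {0..t} a" using acont by (rule continuous_on_subset) auto
      have "\<And>x. 0 < x \<Longrightarrow> x < t \<Longrightarrow> a differentiable (at x)"
      proof -
        fix x :: real assume "0 < x"
        then have "(a has_real_derivative a1 x) (at x)" using d1 by simp
        then show "a differentiable (at x)" unfolding real_differentiable_def by blast
      qed
      from MVT[OF t(1) ct this] obtain l z where z: "0 < z" "z < t" "(a has_real_derivative l) (at z)"
        "a t - a 0 = (t - 0) * l" by blast
      have d1z: "(a has_real_derivative a1 z) (at z)" using d1 z(1) by simp
      have l: "l = a1 z" by (rule DERIV_unique[OF z(3) d1z])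
      have zt: "z \<le> t" using z by simp
      have der: "\<exists>y. (a1 has_real_derivative y) (at x) \<and> 0 \<le> y" if "z < x" "x < t" for x
        using d2 e z t that by (intro exI[of _ "a2 x"]) auto
      have cont: "continuous_on {z..t} a1"
      proof (rule continuous_at_imp_continuous_on, intro ballI)
        fix x assume "x \<in> {z..t}"
        then have "x > 0" using z by auto
        then have "(a1 has_real_derivative a2 x) (at x)" using d2 by simp
        then show "isCont a1 x" by (rule DERIV_isCont)
      qed
      have "a1 z \<le> a1 t" by (rule DERIV_nonneg_imp_increasing_open[OF zt der cont])
      have a1t: "a1 t > 0" by (rule a1pos_gen[OF smono d1 nz t(1)])
      have at1: "a t = t * a1 z" using z(4) l a0 by simp
      have "t * a1 z \<le> t * a1 t" using `a1 z \<le> a1 t` t by (intro mult_left_mono) auto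
      then have atle: "a t \<le> t * a1 t" using at1 by linarith
      have at: "a t \<ge> 0" using at1 a1pos_gen[OF smono d1 nz z(1)] t by simp
      have "a t / a1 t \<le> t" using atle a1t by (simp add: divide_le_eq)
      moreover have "a t / a1 t \<ge> 0" using at a1t by simp
      ultimately show ?thesis by simp
    qed
    have ev: "\<forall>\<^sub>F t in at_right 0. norm (a t / a1 t) \<le> t"
      unfolding eventually_at_right_field by (intro exI[of _ e]) (use e(1) bound in auto)
    have "((\<lambda>t. t) \<longlongrightarrow> 0) (at_right (0::real))" by (rule tendsto_ident_at)
    then show ?thesis by (rule Lim_null_comparison[OF ev])
  qed
qed


theorem theorem6p2:
  fixes a a1 a2 a3 :: "real \<Rightarrow> real"
  assumes sreg: "strongly_regular_scale_factor a a1 a2"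
    and even: "\<forall>t. a (- t) = a t"
    and d3: "\<forall>t>0. (a2 has_real_derivative a3 t) (at t)"
    and init: "((a1 \<longlongrightarrow> 0) (at_right 0) \<and> (\<exists>\<epsilon>>0. \<forall>t\<in>{0<..<\<epsilon>}. a2 t \<ge> 0))
             \<or> (\<exists>L>0. (a1 \<longlongrightarrow> L) (at_right 0))"
    and bound: "\<exists>C>0. \<forall>t>0. \<bar>a3 t * (a t)\<^sup>2 / (a1 t) ^ 3\<bar> \<le> C"
  shows "\<forall>\<tau>>0. \<exists>D. (rhoM a has_real_derivative D) (at \<tau>) \<and>
                   gtt a a1 a2 \<tau> (rhoM a \<tau>) + D\<^sup>2 = 0"
proof -
  from sreg obtain K where K: "K \<ge> 1" "\<forall>t>0. a t * a2 t / (a1 t)\<^sup>2 \<ge> - K"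
    and reg: "regular_scale_factor a a1 a2"
    unfolding strongly_regular_scale_factor_def by blast
  note r = reg[unfolded regular_scale_factor_def]
  have a0: "a 0 = 0" using r by blast
  have sm: "strict_mono_on {0..} a" using r by blast
  have ac: "continuous_on {0..} a" using r by blast
  have d1: "\<forall>t>0. (a has_real_derivative a1 t) (at t)" using r by blast
  have d2: "\<forall>t>0. (a1 has_real_derivative a2 t) (at t)" using r by blast
  have c2: "continuous_on {0<..} a2" using r by blast
  have nz: "\<forall>t>0. a1 t \<noteq> 0" using r by blast
  have ku: "\<forall>t>0. a t * a2 t / (a1 t)\<^sup>2 \<le> 1" using r by blast
  have l0: "((\<lambda>t. a t / a1 t) \<longlongrightarrow> 0) (at_right 0)"
    by (rule lim0_gen[OF a0 sm ac d1 d2 nz init])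
  have ev: "\<And>t. a (- t) = a t" using even by blast
  interpret SF a a1 a2 K
  proof (rule SF.intro[OF a0 sm ac _ _ c2 _ _ _ K(1) ev l0])
    show "\<And>t. t>0 \<Longrightarrow> (a has_real_derivative a1 t) (at t)" using d1 by blast
    show "\<And>t. t>0 \<Longrightarrow> (a1 has_real_derivative a2 t) (at t)" using d2 by blast
    show "\<And>t. t>0 \<Longrightarrow> a1 t \<noteq> 0" using nz by blast
    show "\<And>t. t>0 \<Longrightarrow> a t * a2 t / (a1 t)^2 \<le> 1" using ku by blast
    show "\<And>t. t>0 \<Longrightarrow> a t * a2 t / (a1 t)^2 \<ge> -K" using K(2) by blast
  qed
  show ?thesis using main_loc by blast
qed

end
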